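(* For all integers $r, k \geq 1$, we have $s_r(K_{k+1}) \geq P_r(k)$.
   Context: All graphs are finite and simple. For graphs $G,H$ and an integer $r\ge 1$, write $G \rightarrow (H)_r$ if every colouring of the edges of $G$ with $r$ colours contains a monochromatic copy of $H$. A graph $G$ is $r$-Ramsey-minimal for $H$ if $G \rightarrow (H)_r$ but no proper subgraph $G'\subsetneq G$ satisfies $G' \rightarrow (H)_r$. Define $s_r(H) := \min \delta(G)$ over all graphs $G$ that are $r$-Ramsey-minimal for $H$, where $\delta$ denotes minimum degree. A colour pattern on a vertex set $V$ is a sequence $G_1,\dots,G_r$ of pairwise edge-disjoint graphs all having vertex set $V$; it is $H$-free if no $G_i$ contains $H$ as a subgraph. Given a colour pattern $G_1,\dots,G_r$ on $V$ and a colouring $c: V \to [r]$, a strongly monochromatic $K_k$ is a set of $k$ vertices all receiving the same colour $i$ under $c$ and forming a clique in $G_i$. $P_r(k)$ is the smallest integer $n$ such that there exists a $K_{k+1}$-free colour pattern $G_1,\dots,G_r$ on an $n$-element vertex set $V$ such that every colouring $V \to [r]$ yields a strongly monochromatic $K_k$. *)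

theory Defs
  imports Main "HOL-Library.Extended_Nat"
begin

type_synonym 'a graph = "'a set \<times> 'a set set"

definition verts :: "'a graph \<Rightarrow> 'a set" where "verts G = fst G"
definition edges :: "'a graph \<Rightarrow> 'a set set" where "edges G = snd G"

definition is_graph :: "'a graph \<Rightarrow> bool" where
  "is_graph G \<longleftrightarrow> finite (verts G) \<and> (\<forall>e\<in>edges G. card e = 2 \<and> e \<subseteq> verts G)"

definition subgraph :: "'a graph \<Rightarrow> 'a graph \<Rightarrow> bool" where
  "subgraph H G \<longleftrightarrow> is_graph H \<and> verts H \<subseteq> verts G \<and> edges H \<subseteq> edges G"

definition complete :: "nat \<Rightarrow> nat graph" where
  "complete n = ({0..<n}, {e. e \<subseteq> {0..<n} \<and> card e = 2})"

definition embeds :: "('b \<Rightarrow> 'a) \<Rightarrow> 'b graph \<Rightarrow> 'a graph \<Rightarrow> bool" where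
  "embeds f H G \<longleftrightarrow> inj_on f (verts H) \<and> f ` verts H \<subseteq> verts G \<and>
      (\<forall>e\<in>edges H. f ` e \<in> edges G)"

definition contains_copy :: "'b graph \<Rightarrow> 'a graph \<Rightarrow> bool" where
  "contains_copy H G \<longleftrightarrow> (\<exists>f. embeds f H G)"

definition arrows :: "'a graph \<Rightarrow> 'b graph \<Rightarrow> nat \<Rightarrow> bool" where
  "arrows G H r \<longleftrightarrow>
     (\<forall>c :: 'a set \<Rightarrow> nat. (\<forall>e\<in>edges G. c e < r) \<longrightarrow>
        (\<exists>i<r. \<exists>f. embeds f H G \<and> (\<forall>e\<in>edges H. c (f ` e) = i)))"

definition ramsey_minimal :: "nat \<Rightarrow> 'b graph \<Rightarrow> 'a graph \<Rightarrow> bool" where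
  "ramsey_minimal r H G \<longleftrightarrow> is_graph G \<and> arrows G H r \<and>
     (\<forall>G'. subgraph G' G \<and> G' \<noteq> G \<longrightarrow> \<not> arrows G' H r)"

definition degree :: "'a graph \<Rightarrow> 'a \<Rightarrow> nat" where
  "degree G v = card {e \<in> edges G. v \<in> e}"

definition min_degree :: "'a graph \<Rightarrow> nat" where
  "min_degree G = Min (degree G ` verts G)"

text \<open>Every finite graph is isomorphic to one on vertex type nat, so we range over those.
Minimum of the empty set is \<infinity>.\<close>
definition s_r :: "nat \<Rightarrow> 'b graph \<Rightarrow> enat" where
  "s_r r H = (INF G \<in> {G :: nat graph. ramsey_minimal r H G}. enat (min_degree G))"

definition colour_pattern :: "nat \<Rightarrow> 'a set \<Rightarrow> (nat \<Rightarrow> 'a set set) \<Rightarrow> bool" where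
  "colour_pattern r V Gs \<longleftrightarrow>
     (\<forall>i<r. is_graph (V, Gs i)) \<and> (\<forall>i<r. \<forall>j<r. i \<noteq> j \<longrightarrow> Gs i \<inter> Gs j = {})"

definition pattern_free :: "nat \<Rightarrow> 'a set \<Rightarrow> (nat \<Rightarrow> 'a set set) \<Rightarrow> 'b graph \<Rightarrow> bool" where
  "pattern_free r V Gs H \<longleftrightarrow> (\<forall>i<r. \<not> contains_copy H (V, Gs i))"

definition strongly_mono_clique ::
  "nat \<Rightarrow> 'a set \<Rightarrow> (nat \<Rightarrow> 'a set set) \<Rightarrow> ('a \<Rightarrow> nat) \<Rightarrow> nat \<Rightarrow> bool" where
  "strongly_mono_clique r V Gs c k \<longleftrightarrow>
     (\<exists>i<r. \<exists>S. S \<subseteq> V \<and> card S = k \<and> (\<forall>v\<in>S. c v = i) \<and>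
        (\<forall>e. e \<subseteq> S \<and> card e = 2 \<longrightarrow> e \<in> Gs i))"

text \<open>P_r(k) (infimum over achievable n, \<infinity> if none).\<close>
definition P_r :: "nat \<Rightarrow> nat \<Rightarrow> enat" where
  "P_r r k = (INF n \<in> {n. \<exists>(V :: nat set) Gs. finite V \<and> card V = n \<and>
        colour_pattern r V Gs \<and> pattern_free r V Gs (complete (k + 1)) \<and>
        (\<forall>c. (\<forall>v\<in>V. c v < r) \<longrightarrow> strongly_mono_clique r V Gs c k)}. enat n)"

end

theory Submission
  imports Defs
begin

lemma verts_pair[simp]: "verts (a, b) = a" by (simp add: verts_def)
lemma edges_pair[simp]: "edges (a, b) = b" by (simp add: edges_def)

lemma card2_other:
  assumes "card e = 2" "v \<in> e"
  shows "\<exists>u. u \<noteq> v \<and> e = {v, u}"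
  using assms by (metis card_2_iff doubleton_eq_iff insertE singletonD)

lemma main:
  fixes G :: "nat graph"
  assumes r: "r \<ge> 1" and k: "k \<ge> 1" and rm: "ramsey_minimal r (complete (k+1)) G"
  shows "P_r r k \<le> enat (min_degree G)"
proof -
  obtain VG EG where G: "G = (VG, EG)" by (cases G)
  define K where "K = complete (k+1)"
  have vK: "verts K = {0..<Suc k}" and eK: "edges K = {e. e \<subseteq> {0..<Suc k} \<and> card e = 2}"
    by (simp_all add: K_def complete_def)
  have gG: "finite VG" "\<And>e. e \<in> EG \<Longrightarrow> card e = 2 \<and> e \<subseteq> VG"
    using rm G by (auto simp: ramsey_minimal_def is_graph_def)
  have arr: "arrows (VG, EG) K r" using rm G K_def by (simp add: ramsey_minimal_def)
  have minl: "\<And>G'. subgraph G' (VG, EG) \<Longrightarrow> G' \<noteq> (VG, EG) \<Longrightarrow> \<not> arrows G' K r"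
    using rm G K_def unfolding ramsey_minimal_def by blast
  have ne: "VG \<noteq> {}"
  proof
    assume "VG = {}"
    have "\<exists>i<r. \<exists>f. embeds f K (VG, EG) \<and> (\<forall>e\<in>edges K. (\<lambda>_. 0::nat) (f ` e) = i)"
      using arr[unfolded arrows_def, rule_format, of "\<lambda>_. 0"] r by simp
    then obtain f where "embeds f K (VG, EG)" by blast
    then have "f ` {0..<Suc k} \<subseteq> {}" using \<open>VG = {}\<close> by (simp add: embeds_def vK)
    then show False by auto
  qed
  have "min_degree G \<in> degree G ` VG"
    unfolding min_degree_def using G ne gG(1) by (simp add: Min_in)
  then obtain v where v: "v \<in> VG" and dv: "degree G v = min_degree G" by auto
  define G' where "G' = (VG - {v}, {e \<in> EG. v \<notin> e})"
  have "subgraph G' (VG, EG)"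
    using gG unfolding subgraph_def G'_def is_graph_def by auto
  moreover have "G' \<noteq> (VG, EG)" using v by (auto simp: G'_def)
  ultimately have "\<not> arrows G' K r" using minl by blast
  then obtain c :: "nat set \<Rightarrow> nat" where
    c1: "\<forall>e\<in>edges G'. c e < r" and
    c2: "\<not> (\<exists>i<r. \<exists>f. embeds f K G' \<and> (\<forall>e\<in>edges K. c (f ` e) = i))"
    unfolding arrows_def by blast
  have cr: "\<And>e. e \<in> EG \<Longrightarrow> v \<notin> e \<Longrightarrow> c e < r"
    using c1 by (simp add: G'_def)
  have nomono: "\<And>i f. i < r \<Longrightarrow> embeds f K G' \<Longrightarrow> (\<forall>e\<in>edges K. c (f ` e) = i) \<Longrightarrow> False"
    using c2 by blast
  define N where "N = {u. {v, u} \<in> EG}"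
  have NV: "N \<subseteq> VG" using gG unfolding N_def by auto
  have vN: "v \<notin> N" using gG unfolding N_def by fastforce
  have finN: "finite N" using NV gG(1) finite_subset by auto
  have cardN: "card N = degree G v"
  proof -
    have "bij_betw (\<lambda>u. {v, u}) N {e \<in> EG. v \<in> e}"
    proof (rule bij_betwI')
      show "\<And>x y. x \<in> N \<Longrightarrow> y \<in> N \<Longrightarrow> ({v, x} = {v, y}) = (x = y)"
        using vN by (auto simp: doubleton_eq_iff)
      show "\<And>x. x \<in> N \<Longrightarrow> {v, x} \<in> {e \<in> EG. v \<in> e}" by (auto simp: N_def)
      show "\<exists>x\<in>N. y = {v, x}" if "y \<in> {e \<in> EG. v \<in> e}" for y
        using that gG(2)[of y] card2_other[of y v] by (auto simp: N_def)
    qed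
    then show ?thesis using G by (simp add: degree_def bij_betw_same_card)
  qed
  define Gs where "Gs = (\<lambda>i. {e \<in> EG. e \<subseteq> N \<and> c e = i})"
  have cp: "colour_pattern r N Gs"
    unfolding colour_pattern_def is_graph_def Gs_def using finN gG by auto
  have pf: "pattern_free r N Gs K"
    unfolding pattern_free_def contains_copy_def
  proof (intro allI impI notI)
    fix i assume i: "i < r"
    assume "\<exists>f. embeds f K (N, Gs i)"
    then obtain f where f: "embeds f K (N, Gs i)" by blast
    have "embeds f K G'" using f NV vN unfolding embeds_def G'_def Gs_def by fastforce
    moreover have "\<forall>e\<in>edges K. c (f ` e) = i" using f unfolding embeds_def Gs_def by auto
    ultimately show False using nomono i by blast
  qed
  have sm: "strongly_mono_clique r N Gs cv k" if cvr: "\<forall>u\<in>N. cv u < r" for cv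
  proof -
    define c' where "c' = (\<lambda>e. if v \<in> e then cv (SOME u. u \<in> e - {v}) else c e)"
    have c'v: "c' {v, u} = cv u" if "u \<in> N" for u
    proof -
      have "{v, u} - {v} = {u}" using vN that by auto
      then show ?thesis unfolding c'_def by simp
    qed
    have "\<forall>e\<in>edges (VG, EG). c' e < r"
    proof
      fix e assume e: "e \<in> edges (VG, EG)"
      show "c' e < r"
      proof (cases "v \<in> e")
        case True
        have eE: "e \<in> EG" using e by simp
        obtain u where "u \<noteq> v" "e = {v, u}" using card2_other[of e v] gG(2)[OF eE] True by blast
        then have "u \<in> N" using e by (simp add: N_def)
        then show ?thesis using c'v cvr \<open>e = {v, u}\<close> by auto
      next
        case False then show ?thesis using cr e by (simp add: c'_def)
      qed
    qed
    then obtain i f where i: "i < r" and f: "embeds f K (VG, EG)"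
      and fc: "\<forall>e\<in>edges K. c' (f ` e) = i"
      using arr unfolding arrows_def by blast
    have finj: "inj_on f {0..<Suc k}" and fV: "f ` {0..<Suc k} \<subseteq> VG"
      and fe: "\<And>e. e \<subseteq> {0..<Suc k} \<Longrightarrow> card e = 2 \<Longrightarrow> f ` e \<in> EG"
      using f by (auto simp: embeds_def vK eK)
    show ?thesis
    proof (cases "v \<in> f ` {0..<Suc k}")
      case False
      have "embeds f K G'"
        unfolding embeds_def G'_def using finj fV fe False by (auto simp: vK eK)
      moreover have "\<forall>e\<in>edges K. c (f ` e) = i"
      proof
        fix e assume e: "e \<in> edges K"
        then have "v \<notin> f ` e" using False eK by auto
        moreover have "c' (f ` e) = i" using fc e by blast
        ultimately show "c (f ` e) = i" by (simp add: c'_def)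
      qed
      ultimately show ?thesis using nomono i by blast
    next
      case True
      then obtain j where j: "j < Suc k" "f j = v" by auto
      define S where "S = f ` ({0..<Suc k} - {j})"
      have cardS: "card S = k" unfolding S_def
        using finj j by (subst card_image) (auto intro: inj_on_subset)
      have vS: "v \<notin> S" unfolding S_def using finj j by (auto simp: inj_on_def)
      have SN: "\<forall>x\<in>S. x \<in> N \<and> cv x = i"
      proof
        fix x assume "x \<in> S"
        then obtain j' where j'0: "j' \<in> {0..<Suc k} - {j}" "x = f j'" unfolding S_def by (rule imageE)
        then have j': "j' < Suc k" "j' \<noteq> j" "x = f j'" by auto
        have "f ` {j, j'} \<in> EG" using fe[of "{j, j'}"] j j' by auto
        then have xN: "x \<in> N" using j j' by (simp add: N_def)
        have "{j, j'} \<in> edges K" using j j' by (simp add: eK)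
        then have "c' (f ` {j, j'}) = i" using fc by blast
        then have "cv x = i" using c'v[OF xN] j j' by simp
        then show "x \<in> N \<and> cv x = i" using xN by simp
      qed
      have cl: "\<forall>e. e \<subseteq> S \<and> card e = 2 \<longrightarrow> e \<in> Gs i"
      proof (intro allI impI)
        fix e assume e: "e \<subseteq> S \<and> card e = 2"
        define P where "P = {x \<in> {0..<Suc k} - {j}. f x \<in> e}"
        have fP: "f ` P = e"
        proof
          show "f ` P \<subseteq> e" unfolding P_def by auto
          show "e \<subseteq> f ` P"
          proof
            fix x assume xe: "x \<in> e"
            then have "x \<in> S" using e by auto
            then obtain y where "y \<in> {0..<Suc k} - {j}" "x = f y" unfolding S_def by (rule imageE)
            then show "x \<in> f ` P" using xe unfolding P_def by auto
          qed
        qed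
        have "inj_on f P" using finj unfolding P_def by (auto intro: inj_on_subset)
        then have cP: "card P = 2" using fP e card_image by fastforce
        have Psub: "P \<subseteq> {0..<Suc k}" unfolding P_def by auto
        have eE: "e \<in> EG" using fe[OF Psub cP] fP by simp
        have "c' e = i" using fc Psub cP fP eK by auto
        moreover have "v \<notin> e" using e vS by auto
        ultimately have "c e = i" by (simp add: c'_def)
        then show "e \<in> Gs i" unfolding Gs_def using eE e SN by auto
      qed
      show ?thesis unfolding strongly_mono_clique_def
        using i cardS SN cl by (intro exI[of _ i] conjI) (auto intro!: exI[of _ S])
    qed
  qed
  have "card N \<in> {n. \<exists>(V :: nat set) Gs. finite V \<and> card V = n \<and>
        colour_pattern r V Gs \<and> pattern_free r V Gs (complete (k + 1)) \<and>
        (\<forall>c. (\<forall>v\<in>V. c v < r) \<longrightarrow> strongly_mono_clique r V Gs c k)}"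
    using finN cp pf sm K_def by blast
  then have "P_r r k \<le> enat (card N)" unfolding P_r_def by (rule INF_lower)
  then show ?thesis using cardN dv by simp
qed

theorem lemma2p1:
  fixes r k :: nat
  assumes "r \<ge> 1" and "k \<ge> 1"
  shows "s_r r (complete (k + 1)) \<ge> P_r r k"
  unfolding s_r_def using main[OF assms] by (auto intro: INF_greatest)

end
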